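(* Let $T$ be a $G$-spaced star with center $r$ and leaves $[m]$. Let $I\subsetneq[m]$ and let $T'$ be the $G$-spaced star with center $r$ (with the same $V_r,B_r$) and leaves $[m]\setminus I$, with the same spaces attached to the leaves it shares with $T$. Let $\theta$ be a $G$-invariant tensor in $\bigotimes_{v\in I}V_v^*$. Then the map $L(T)\to L(T')$ defined by $\bigotimes_{v\in[m]}x_v\mapsto\theta\bigl(\bigotimes_{v\in I}x_v\bigr)\cdot\bigotimes_{v\in[m]\setminus I}x_v$ maps $\mathcal{X}(T)$ into $\mathcal{X}(T')$.
   Context: $G$ is a finite Abelian group, $K$ an infinite field over which every finite-dimensional $G$-representation splits into one-dimensional irreducibles. A $G$-spaced star with center $r$ and leaves $[m]=\{0,\ldots,m-1\}$ consists of a star-shaped tree with these vertices, and for each vertex $v$ a finite-dimensional $G$-representation $V_v$ with a distinguished basis $B_v$ permuted by $G$ and the symmetric bilinear form $(\cdot|\cdot)_v$ making $B_v$ orthonormal. $L(T)=\bigotimes_{v\in[m]}V_v$. A $G$-representation of $T$ is a tuple $A=(A_{rv})_{v\in[m]}$ of $G$-invariant elements $A_{rv}\in V_r\otimes V_v$; writing $A_{rv}=\sum_{b\in B_r}b\otimes a_{b,v}$, set $\Psi_T(A)=\sum_{b\in B_r}\bigotimes_{v\in[m]}a_{b,v}\in L(T)$ (this is the contraction of $\bigotimes_vA_{rv}$ at the center along $\sum_{b\in B_r}(b|\cdot)_r^{\otimes m}$). The equivariant model $\mathcal{X}(T)$ is the Zariski closure of the set of all $\Psi_T(A)$. *)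

theory Defs
  imports "HOL-Algebra.Group_Action" "HOL-Library.FuncSet"
begin

text \<open>n x n matrices over a field are functions nat => nat => 'k (entries with indices < n matter).\<close>

definition mmul :: "nat \<Rightarrow> (nat \<Rightarrow> nat \<Rightarrow> 'k::comm_ring_1) \<Rightarrow> (nat \<Rightarrow> nat \<Rightarrow> 'k) \<Rightarrow> nat \<Rightarrow> nat \<Rightarrow> 'k" where
  "mmul n P Q = (\<lambda>i j. \<Sum>k<n. P i k * Q k j)"

definition mat_eq :: "nat \<Rightarrow> (nat \<Rightarrow> nat \<Rightarrow> 'k) \<Rightarrow> (nat \<Rightarrow> nat \<Rightarrow> 'k) \<Rightarrow> bool" where
  "mat_eq n P Q \<longleftrightarrow> (\<forall>i<n. \<forall>j<n. P i j = Q i j)"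

definition mid :: "nat \<Rightarrow> nat \<Rightarrow> 'k::comm_ring_1" where
  "mid i j = (if i = j then 1 else 0)"

text \<open>A representation of the group G on K^n (every finite-dimensional representation is
  isomorphic to one of these).\<close>
definition is_matrep :: "('g, 'x) monoid_scheme \<Rightarrow> nat \<Rightarrow> ('g \<Rightarrow> nat \<Rightarrow> nat \<Rightarrow> 'k::comm_ring_1) \<Rightarrow> bool" where
  "is_matrep G n \<rho> \<longleftrightarrow> mat_eq n (\<rho> \<one>\<^bsub>G\<^esub>) mid \<and>
     (\<forall>g\<in>carrier G. \<forall>h\<in>carrier G. mat_eq n (\<rho> (g \<otimes>\<^bsub>G\<^esub> h)) (mmul n (\<rho> g) (\<rho> h)))"

text \<open>Every finite-dimensional G-representation over K splits into one-dimensional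
  irreducibles, i.e. is simultaneously diagonalizable in a suitable basis.\<close>
definition reps_split :: "('g, 'x) monoid_scheme \<Rightarrow> 'k::field itself \<Rightarrow> bool" where
  "reps_split G _ \<longleftrightarrow> (\<forall>n (\<rho> :: 'g \<Rightarrow> nat \<Rightarrow> nat \<Rightarrow> 'k). is_matrep G n \<rho> \<longrightarrow>
     (\<exists>P Q. mat_eq n (mmul n P Q) mid \<and> mat_eq n (mmul n Q P) mid \<and>
        (\<forall>g\<in>carrier G. \<forall>i<n. \<forall>j<n. i \<noteq> j \<longrightarrow> mmul n (mmul n Q (\<rho> g)) P i j = 0)))"

inductive_set polyfun :: "'i set \<Rightarrow> (('i \<Rightarrow> 'k::comm_ring_1) \<Rightarrow> 'k) set" for C where
  pf_const: "(\<lambda>x. c) \<in> polyfun C"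
| pf_coord: "i \<in> C \<Longrightarrow> (\<lambda>x. x i) \<in> polyfun C"
| pf_add: "p \<in> polyfun C \<Longrightarrow> q \<in> polyfun C \<Longrightarrow> (\<lambda>x. p x + q x) \<in> polyfun C"
| pf_mult: "p \<in> polyfun C \<Longrightarrow> q \<in> polyfun C \<Longrightarrow> (\<lambda>x. p x * q x) \<in> polyfun C"

definition vecs :: "'i set \<Rightarrow> ('i \<Rightarrow> 'k::zero) set" where
  "vecs C = {x. \<forall>i. i \<notin> C \<longrightarrow> x i = 0}"

definition zariski_closure :: "'i set \<Rightarrow> ('i \<Rightarrow> 'k::comm_ring_1) set \<Rightarrow> ('i \<Rightarrow> 'k) set" where
  "zariski_closure C S = {x \<in> vecs C. \<forall>p \<in> polyfun C. (\<forall>s\<in>S. p s = 0) \<longrightarrow> p x = 0}"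

text \<open>Leaves are a finite set J of natural numbers; leaf v carries V_v = K^(B v) with G acting
  by permuting the basis B v via act v; the center carries V_r = K^Br with action actr.
  L(T) = tensor product of the V_v, v in J, is K^(PiE J B) (coordinates w.r.t. the
  product basis). An element of V_r (x) V_v is a function Br x B v -> K.\<close>

definition star_param :: "('g, 'x) monoid_scheme \<Rightarrow> 'c set \<Rightarrow> ('g \<Rightarrow> 'c \<Rightarrow> 'c)
   \<Rightarrow> nat set \<Rightarrow> (nat \<Rightarrow> 'b set) \<Rightarrow> (nat \<Rightarrow> 'g \<Rightarrow> 'b \<Rightarrow> 'b)
   \<Rightarrow> (nat \<Rightarrow> 'c \<Rightarrow> 'b \<Rightarrow> 'k) \<Rightarrow> bool" where
  "star_param G Br actr J B act A \<longleftrightarrow>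
     (\<forall>v\<in>J. \<forall>g\<in>carrier G. \<forall>b\<in>Br. \<forall>c\<in>B v. A v (actr g b) (act v g c) = A v b c)"

definition Psi :: "'c set \<Rightarrow> nat set \<Rightarrow> (nat \<Rightarrow> 'b set) \<Rightarrow> (nat \<Rightarrow> 'c \<Rightarrow> 'b \<Rightarrow> 'k::comm_ring_1)
   \<Rightarrow> (nat \<Rightarrow> 'b) \<Rightarrow> 'k" where
  "Psi Br J B A = (\<lambda>c. if c \<in> PiE J B then (\<Sum>b\<in>Br. \<Prod>v\<in>J. A v b (c v)) else 0)"

definition equiv_model :: "('g, 'x) monoid_scheme \<Rightarrow> 'c set \<Rightarrow> ('g \<Rightarrow> 'c \<Rightarrow> 'c)
   \<Rightarrow> nat set \<Rightarrow> (nat \<Rightarrow> 'b set) \<Rightarrow> (nat \<Rightarrow> 'g \<Rightarrow> 'b \<Rightarrow> 'b) \<Rightarrow> ((nat \<Rightarrow> 'b) \<Rightarrow> 'k::comm_ring_1) set" where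
  "equiv_model G Br actr J B act =
     zariski_closure (PiE J B) {Psi Br J B A | A. star_param G Br actr J B act A}"

text \<open>G-invariance of theta in the tensor product of the duals V_v^*, v in I, written in the
  dual basis (which G permutes in the same way as B v).\<close>
definition invariant_tensor :: "('g, 'x) monoid_scheme \<Rightarrow> nat set \<Rightarrow> (nat \<Rightarrow> 'b set)
   \<Rightarrow> (nat \<Rightarrow> 'g \<Rightarrow> 'b \<Rightarrow> 'b) \<Rightarrow> ((nat \<Rightarrow> 'b) \<Rightarrow> 'k) \<Rightarrow> bool" where
  "invariant_tensor G I B act \<theta> \<longleftrightarrow>
     (\<forall>g\<in>carrier G. \<forall>d\<in>PiE I B. \<theta> (\<lambda>v\<in>I. act v g (d v)) = \<theta> d)"

text \<open>The linear map L(T) -> L(T') induced by x_1 (x) ... (x) x_m |-> theta(x_I) * x_{J-I}.\<close>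
definition contract :: "nat set \<Rightarrow> nat set \<Rightarrow> (nat \<Rightarrow> 'b set) \<Rightarrow> ((nat \<Rightarrow> 'b) \<Rightarrow> 'k::comm_ring_1)
   \<Rightarrow> ((nat \<Rightarrow> 'b) \<Rightarrow> 'k) \<Rightarrow> (nat \<Rightarrow> 'b) \<Rightarrow> 'k" where
  "contract J I B \<theta> x = (\<lambda>c. if c \<in> PiE (J - I) B
      then (\<Sum>d\<in>PiE I B. \<theta> d * x (\<lambda>v. if v \<in> I then d v else c v)) else 0)"

end

theory Submission
  imports Defs
begin

lemma polyfun_sum:
  assumes "finite S" "\<And>s. s \<in> S \<Longrightarrow> f s \<in> polyfun C"
  shows "(\<lambda>x. \<Sum>s\<in>S. f s x) \<in> polyfun C"
  using assms
proof (induction S rule: finite_induct)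
  case empty
  then show ?case by (simp add: polyfun.pf_const)
next
  case (insert a S)
  then show ?case using polyfun.pf_add[of "f a" C "\<lambda>x. \<Sum>s\<in>S. f s x"] by simp
qed

lemma polyfun_comp:
  assumes "p \<in> polyfun C'" "\<And>i. i \<in> C' \<Longrightarrow> (\<lambda>x. L x i) \<in> polyfun C"
  shows "(\<lambda>x. p (L x)) \<in> polyfun C"
  using assms
proof (induction p rule: polyfun.induct)
  case (pf_const c)
  then show ?case by (metis polyfun.pf_const)
next
  case (pf_coord i)
  then show ?case by simp
next
  case (pf_add p q)
  then show ?case using polyfun.pf_add by fastforce
next
  case (pf_mult p q)
  then show ?case using polyfun.pf_mult by fastforce
qed

theorem lemma6p4:
  fixes G :: "('g, 'x) monoid_scheme"
    and m :: nat and I :: "nat set"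
    and Br :: "'c set" and actr :: "'g \<Rightarrow> 'c \<Rightarrow> 'c"
    and B :: "nat \<Rightarrow> 'b set" and act :: "nat \<Rightarrow> 'g \<Rightarrow> 'b \<Rightarrow> 'b"
    and \<theta> :: "(nat \<Rightarrow> 'b) \<Rightarrow> 'k::field"
  assumes "comm_group G" and "finite (carrier G)"
    and "infinite (UNIV :: 'k set)"
    and "reps_split G TYPE('k)"
    and "finite Br" and "group_action G Br actr"
    and "\<And>v. v < m \<Longrightarrow> finite (B v)"
    and "\<And>v. v < m \<Longrightarrow> group_action G (B v) (act v)"
    and "I \<subset> {..<m}"
    and "invariant_tensor G I B act \<theta>"
  shows "contract {..<m} I B \<theta> ` equiv_model G Br actr {..<m} B act
           \<subseteq> equiv_model G Br actr ({..<m} - I) B act"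
proof -
  define J where "J = {..<m}"
  interpret G: group G using assms(1) comm_group.axioms(2) by blast
  have IJ: "I \<subseteq> J" using assms(9) J_def by blast
  obtain w where w: "w \<in> J - I" using assms(9) J_def by blast
  have finI: "finite I" using IJ J_def finite_subset by blast
  have finPI: "finite (PiE I B)"
    using finI IJ assms(7) J_def by (intro finite_PiE) auto
  have finPJ: "finite (PiE J B)"
    using assms(7) J_def by (intro finite_PiE) auto
  define mg where "mg = (\<lambda>(c::nat \<Rightarrow> 'b) d v. if v \<in> I then d v else c v)"
  have mgP: "mg c d \<in> PiE J B" if "c \<in> PiE (J - I) B" "d \<in> PiE I B" for c d
    using that IJ unfolding mg_def PiE_def Pi_def extensional_def by auto
  have key: "\<exists>A'. star_param G Br actr (J - I) B act A' \<and>
      contract J I B \<theta> (Psi Br J B A) = Psi Br (J - I) B A'"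
    if A: "star_param G Br actr J B act A" for A
  proof -
    define lam where "lam = (\<lambda>b. \<Sum>d\<in>PiE I B. \<theta> d * (\<Prod>v\<in>I. A v b (d v)))"
    have inv: "lam (actr g b) = lam b" if g: "g \<in> carrier G" and b: "b \<in> Br" for g b
    proof -
      have ga: "group_action G (B v) (act v)" if "v \<in> I" for v
        using assms(8) that IJ J_def by blast
      define fi where "fi = (\<lambda>e. \<lambda>v\<in>I. act v g (e v))"
      define fj where "fj = (\<lambda>e. \<lambda>v\<in>I. act v (inv\<^bsub>G\<^esub> g) (e v))"
      have ig: "inv\<^bsub>G\<^esub> g \<in> carrier G" using g by simp
      have back1: "act v g (act v (inv\<^bsub>G\<^esub> g) x) = x" if "v \<in> I" "x \<in> B v" for v x
        using group_action.orbit_sym_aux[OF ga[OF that(1)] ig that(2) refl] g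
        by simp
      have back2: "act v (inv\<^bsub>G\<^esub> g) (act v g x) = x" if "v \<in> I" "x \<in> B v" for v x
        using group_action.orbit_sym_aux[OF ga[OF that(1)] g that(2) refl] by simp
      have mem1: "act v g x \<in> B v" if "v \<in> I" "x \<in> B v" for v x
        using group_action.element_image[OF ga[OF that(1)] g that(2) refl] .
      have mem2: "act v (inv\<^bsub>G\<^esub> g) x \<in> B v" if "v \<in> I" "x \<in> B v" for v x
        using group_action.element_image[OF ga[OF that(1)] ig that(2) refl] .
      have w1: "fj (fi a) = a" if a: "a \<in> PiE I B" for a using a back2 unfolding fi_def fj_def
          by (intro ext) (auto simp: PiE_def Pi_def extensional_def)
      have w2: "fi a \<in> PiE I B" if a: "a \<in> PiE I B" for a using a mem1 unfolding fi_def by auto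
      have w3: "fi (fj a) = a" if a: "a \<in> PiE I B" for a using a back1 unfolding fi_def fj_def
          by (intro ext) (auto simp: PiE_def Pi_def extensional_def)
      have w4: "fj a \<in> PiE I B" if a: "a \<in> PiE I B" for a using a mem2 unfolding fj_def by auto
      have "lam (actr g b) = (\<Sum>e\<in>PiE I B. \<theta> (fi e) * (\<Prod>v\<in>I. A v (actr g b) (fi e v)))"
        unfolding lam_def
        by (rule sum.reindex_bij_witness[where i=fi and j=fj]) (auto simp: w1 w2 w3 w4)
      also have "\<dots> = (\<Sum>e\<in>PiE I B. \<theta> e * (\<Prod>v\<in>I. A v b (e v)))"
      proof (rule sum.cong[OF refl])
        fix e assume e: "e \<in> PiE I B"
        have "\<theta> (fi e) = \<theta> e" using assms(10) g e unfolding invariant_tensor_def fi_def by blast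
        moreover have "(\<Prod>v\<in>I. A v (actr g b) (fi e v)) = (\<Prod>v\<in>I. A v b (e v))"
        proof (rule prod.cong[OF refl])
          fix v assume v: "v \<in> I"
          have "A v (actr g b) (act v g (e v)) = A v b (e v)"
            using A v IJ g b e unfolding star_param_def by (meson PiE_mem subsetD)
          then show "A v (actr g b) (fi e v) = A v b (e v)" using v unfolding fi_def by simp
        qed
        ultimately show "\<theta> (fi e) * (\<Prod>v\<in>I. A v (actr g b) (fi e v)) = \<theta> e * (\<Prod>v\<in>I. A v b (e v))"
          by simp
      qed
      finally show ?thesis unfolding lam_def .
    qed
    define A' where "A' = (\<lambda>v b c. if v = w then lam b * A v b c else A v b c)"
    have sp: "star_param G Br actr (J - I) B act A'"
      using A inv unfolding star_param_def A'_def by auto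
    have eq: "contract J I B \<theta> (Psi Br J B A) = Psi Br (J - I) B A'"
    proof
      fix c
      show "contract J I B \<theta> (Psi Br J B A) c = Psi Br (J - I) B A' c"
      proof (cases "c \<in> PiE (J - I) B")
        case False
        then show ?thesis unfolding contract_def Psi_def by simp
      next
        case True
        have split: "(\<Prod>v\<in>J. A v b (mg c d v)) =
            (\<Prod>v\<in>I. A v b (d v)) * (\<Prod>v\<in>J - I. A v b (c v))" for b d
        proof -
          have "(\<Prod>v\<in>J. A v b (mg c d v)) = (\<Prod>v\<in>I. A v b (mg c d v)) * (\<Prod>v\<in>J - I. A v b (mg c d v))"
            using prod.subset_diff[OF IJ] J_def by (simp add: mult.commute)
          also have "\<dots> = (\<Prod>v\<in>I. A v b (d v)) * (\<Prod>v\<in>J - I. A v b (c v))"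
            unfolding mg_def by simp
          finally show ?thesis .
        qed
        have "contract J I B \<theta> (Psi Br J B A) c =
            (\<Sum>d\<in>PiE I B. \<theta> d * (\<Sum>b\<in>Br. (\<Prod>v\<in>I. A v b (d v)) * (\<Prod>v\<in>J - I. A v b (c v))))"
        proof -
          have "contract J I B \<theta> (Psi Br J B A) c =
              (\<Sum>d\<in>PiE I B. \<theta> d * Psi Br J B A (mg c d))"
            unfolding contract_def mg_def using True by simp
          also have "\<dots> = (\<Sum>d\<in>PiE I B. \<theta> d * (\<Sum>b\<in>Br. (\<Prod>v\<in>I. A v b (d v)) * (\<Prod>v\<in>J - I. A v b (c v))))"
          proof (rule sum.cong[OF refl])
            fix d assume d: "d \<in> PiE I B"
            have "Psi Br J B A (mg c d) = (\<Sum>b\<in>Br. \<Prod>v\<in>J. A v b (mg c d v))"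
              unfolding Psi_def using mgP[OF True d] by simp
            then show "\<theta> d * Psi Br J B A (mg c d) = \<theta> d * (\<Sum>b\<in>Br. (\<Prod>v\<in>I. A v b (d v)) * (\<Prod>v\<in>J - I. A v b (c v)))"
              by (simp only: split)
          qed
          finally show ?thesis .
        qed
        also have "\<dots> = (\<Sum>b\<in>Br. \<Sum>d\<in>PiE I B. \<theta> d * (\<Prod>v\<in>I. A v b (d v)) * (\<Prod>v\<in>J - I. A v b (c v)))"
          by (subst sum.swap) (simp add: sum_distrib_left mult.assoc)
        also have "\<dots> = (\<Sum>b\<in>Br. lam b * (\<Prod>v\<in>J - I. A v b (c v)))"
          unfolding lam_def by (simp add: sum_distrib_right)
        also have "\<dots> = (\<Sum>b\<in>Br. \<Prod>v\<in>J - I. A' v b (c v))"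
        proof (rule sum.cong[OF refl])
          fix b
          have fin: "finite (J - I)" using J_def by simp
          have "(\<Prod>v\<in>J - I. A' v b (c v)) = A' w b (c w) * (\<Prod>v\<in>J - I - {w}. A' v b (c v))"
            using prod.remove[OF fin w] .
          also have "\<dots> = lam b * (A w b (c w) * (\<Prod>v\<in>J - I - {w}. A v b (c v)))"
            unfolding A'_def by simp
          also have "A w b (c w) * (\<Prod>v\<in>J - I - {w}. A v b (c v)) = (\<Prod>v\<in>J - I. A v b (c v))"
            using prod.remove[OF fin w, of "\<lambda>v. A v b (c v)"] by simp
          finally show "lam b * (\<Prod>v\<in>J - I. A v b (c v)) = (\<Prod>v\<in>J - I. A' v b (c v))" by simp
        qed
        also have "\<dots> = Psi Br (J - I) B A' c" unfolding Psi_def using True by simp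
        finally show ?thesis .
      qed
    qed
    show ?thesis using sp eq by blast
  qed
  have lin: "(\<lambda>x. contract J I B \<theta> x c) \<in> polyfun (PiE J B)" if "c \<in> PiE (J - I) B" for c
  proof -
    have "(\<lambda>x. \<Sum>d\<in>PiE I B. \<theta> d * x (mg c d)) \<in> polyfun (PiE J B)"
      using finPI mgP[OF that]
      by (intro polyfun_sum) (auto intro!: polyfun.pf_mult polyfun.pf_const polyfun.pf_coord)
    then show ?thesis using that unfolding contract_def mg_def by simp
  qed
  show ?thesis
  proof
    fix y assume "y \<in> contract {..<m} I B \<theta> ` equiv_model G Br actr {..<m} B act"
    then obtain x where x: "x \<in> equiv_model G Br actr J B act" and y: "y = contract J I B \<theta> x"
      unfolding J_def by blast
    have "y \<in> vecs (PiE (J - I) B)" unfolding y vecs_def contract_def by simp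
    moreover have "p y = 0" if p: "p \<in> polyfun (PiE (J - I) B)"
      and van: "\<forall>s\<in>{Psi Br (J - I) B A | A. star_param G Br actr (J - I) B act A}. p s = 0" for p
    proof -
      have pc: "(\<lambda>x. p (contract J I B \<theta> x)) \<in> polyfun (PiE J B)"
        using polyfun_comp[OF p lin] .
      have h1: "\<forall>s\<in>{Psi Br J B A | A. star_param G Br actr J B act A}. p (contract J I B \<theta> s) = 0"
        using key van by fastforce
      have "\<forall>q\<in>polyfun (PiE J B). (\<forall>s\<in>{Psi Br J B A | A. star_param G Br actr J B act A}. q s = 0) \<longrightarrow> q x = 0"
        using x unfolding equiv_model_def zariski_closure_def by simp
      then have "(\<forall>s\<in>{Psi Br J B A | A. star_param G Br actr J B act A}. (\<lambda>x. p (contract J I B \<theta> x)) s = 0) \<longrightarrow> (\<lambda>x. p (contract J I B \<theta> x)) x = 0"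
        using pc by (rule bspec)
      then show ?thesis using h1 unfolding y by simp
    qed
    ultimately show "y \<in> equiv_model G Br actr ({..<m} - I) B act"
      unfolding equiv_model_def zariski_closure_def J_def by blast
  qed
qed

end
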